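(* Let $\mathcal T(W)$ be the directed unweighted graph on $\mathcal V$ having an edge from $i$ to $j$ if and only if $w_{ij}>\tfrac12$. Then $\mathcal V$ is the only non-empty cohesive subset of $\mathcal V$ if and only if the edges of $\mathcal T(W)$ form a single directed cycle that traverses all the nodes of $\mathcal V$.
   Context: Let $n\ge1$, $\mathcal V=\{1,\dots,n\}$, and let $W=(w_{ij})$ be an $n\times n$ row-stochastic matrix (nonnegative entries, each row summing to $1$), viewed as the weighted adjacency matrix of a directed graph on $\mathcal V$. A set $\mathcal M\subseteq\mathcal V$ is cohesive if $\sum_{j\in\mathcal M}w_{ij}\ge\tfrac12$ for every $i\in\mathcal M$. *)

theory Defs
  imports Complex_Main
begin

text \<open>The node set V is the finite type 'a (V = UNIV, nonempty, so n \<ge> 1).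
  W is an n x n matrix given as a function of two node indices.\<close>

definition row_stochastic :: "('a::finite \<Rightarrow> 'a \<Rightarrow> real) \<Rightarrow> bool" where
  "row_stochastic W \<longleftrightarrow> (\<forall>i j. W i j \<ge> 0) \<and> (\<forall>i. (\<Sum>j\<in>UNIV. W i j) = 1)"

definition cohesive :: "('a::finite \<Rightarrow> 'a \<Rightarrow> real) \<Rightarrow> 'a set \<Rightarrow> bool" where
  "cohesive W M \<longleftrightarrow> (\<forall>i\<in>M. (\<Sum>j\<in>M. W i j) \<ge> 1/2)"

definition T_edges :: "('a \<Rightarrow> 'a \<Rightarrow> real) \<Rightarrow> ('a \<times> 'a) set" where
  "T_edges W = {(i, j). W i j > 1/2}"

text \<open>An edge set forms a single directed cycle traversing all nodes: there is an
  enumeration v_0,...,v_{n-1} of all nodes (without repetition) such that the edges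
  are exactly v_k -> v_{(k+1) mod n}. (For n = 1 this is a self-loop.)\<close>
definition is_hamiltonian_cycle_edges :: "('a \<times> 'a) set \<Rightarrow> bool" where
  "is_hamiltonian_cycle_edges E \<longleftrightarrow>
     (\<exists>xs. distinct xs \<and> set xs = UNIV \<and>
        E = {(xs ! k, xs ! ((k + 1) mod length xs)) | k. k < length xs})"

end

theory Submission
  imports Defs
begin

lemma sum_minus_one:
  fixes W :: "'a::finite \<Rightarrow> 'a \<Rightarrow> real"
  assumes "row_stochastic W"
  shows "(\<Sum>j\<in>UNIV - {t}. W i j) = 1 - W i t"
proof -
  have "(\<Sum>j\<in>UNIV. W i j) = W i t + (\<Sum>j\<in>UNIV - {t}. W i j)"
    by (simp add: sum.remove)
  thus ?thesis using assms unfolding row_stochastic_def by simp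
qed

lemma closed_step:
  fixes W :: "'a::finite \<Rightarrow> 'a \<Rightarrow> real"
  assumes rs: "row_stochastic W" and c: "cohesive W M" and i: "i \<in> M" and w: "W i t > 1/2"
  shows "t \<in> M"
proof (rule ccontr)
  assume "t \<notin> M"
  hence "M \<subseteq> UNIV - {t}" by auto
  hence "(\<Sum>j\<in>M. W i j) \<le> (\<Sum>j\<in>UNIV - {t}. W i j)"
    using rs unfolding row_stochastic_def by (intro sum_mono2) auto
  also have "\<dots> = 1 - W i t" using sum_minus_one[OF rs] .
  finally show False using c i w unfolding cohesive_def by force
qed

lemma out_unique:
  fixes W :: "'a::finite \<Rightarrow> 'a \<Rightarrow> real"
  assumes rs: "row_stochastic W" and a: "W i j > 1/2" and b: "W i k > 1/2"
  shows "j = k"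
proof (rule ccontr)
  assume ne: "j \<noteq> k"
  have nn: "\<forall>x\<in>UNIV - {j,k}. 0 \<le> W i x" using rs unfolding row_stochastic_def by blast
  have "(\<Sum>x\<in>{j,k}. W i x) \<le> (\<Sum>x\<in>UNIV. W i x)"
    by (rule sum_mono2) (use nn in auto)
  moreover have "(\<Sum>x\<in>{j,k}. W i x) = W i j + W i k" using ne by simp
  moreover have "(\<Sum>x\<in>UNIV. W i x) = 1" using rs unfolding row_stochastic_def by blast
  ultimately show False using a b by linarith
qed

theorem proposition1:
  fixes W :: "'a::finite \<Rightarrow> 'a \<Rightarrow> real"
  assumes "row_stochastic W"
  shows "(\<forall>M. M \<noteq> {} \<and> cohesive W M \<longrightarrow> M = UNIV) \<longleftrightarrow>
         is_hamiltonian_cycle_edges (T_edges W)"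
proof
  assume H: "\<forall>M. M \<noteq> {} \<and> cohesive W M \<longrightarrow> M = UNIV"
  have inedge: "\<exists>i. W i j > 1/2" for j
  proof (cases "UNIV - {j} = ({}::'a set)")
    case True
    hence U: "UNIV = {j}" by auto
    have "(\<Sum>x\<in>{j}. W j x) = W j j" by simp
    hence "(\<Sum>x\<in>UNIV. W j x) = W j j" by (simp only: U)
    moreover have "(\<Sum>x\<in>UNIV. W j x) = 1" using assms unfolding row_stochastic_def by blast
    ultimately have "W j j > 1/2" by linarith
    thus ?thesis by blast
  next
    case False
    have "UNIV - {j} \<noteq> UNIV" by blast
    hence "\<not> cohesive W (UNIV - {j})" using H False by metis
    then obtain i where "(\<Sum>x\<in>UNIV - {j}. W i x) < 1/2"
      unfolding cohesive_def by (meson not_le)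
    hence "1 - W i j < 1/2" using sum_minus_one[OF assms, where t=j and i=i] by linarith
    thus ?thesis by (intro exI[of _ i]) linarith
  qed
  define p where "p j = (SOME i. W i j > 1/2)" for j
  have pW: "W (p j) j > 1/2" for j unfolding p_def using inedge[of j] by (metis someI_ex)
  have "inj p" using out_unique[OF assms] pW by (metis injI)
  hence "surj p" by (simp add: finite_UNIV_inj_surj)
  hence outedge: "\<exists>j. W i j > 1/2" for i using pW by (metis surjD)
  define s where "s i = (SOME j. W i j > 1/2)" for i
  have sW: "W i (s i) > 1/2" for i unfolding s_def using outedge[of i] by (metis someI_ex)
  have sU: "W i j > 1/2 \<Longrightarrow> j = s i" for i j using out_unique[OF assms] sW by blast
  have "surj s" using inedge sU by (metis surjI)
  hence injs: "inj s" by (simp add: finite_UNIV_surj_inj)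
  define v :: 'a where "v = undefined"
  define Orb where "Orb = range (\<lambda>k. (s ^^ k) v)"
  have "cohesive W Orb" unfolding cohesive_def
  proof
    fix i assume "i \<in> Orb"
    then obtain k where k: "i = (s ^^ k) v" unfolding Orb_def by auto
    have "s i \<in> Orb" unfolding Orb_def k by (metis funpow_Suc_right comp_apply funpow.simps(2) rangeI)
    hence "W i (s i) \<le> (\<Sum>j\<in>Orb. W i j)"
      using assms unfolding row_stochastic_def by (intro member_le_sum) auto
    thus "(\<Sum>j\<in>Orb. W i j) \<ge> 1/2" using sW[of i] by linarith
  qed
  moreover have "Orb \<noteq> {}" unfolding Orb_def by auto
  ultimately have OU: "Orb = UNIV" using H by blast
  have "\<not> inj (\<lambda>k::nat. (s ^^ k) v)"
  proof
    assume "inj (\<lambda>k::nat. (s ^^ k) v)"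
    moreover have "finite (range (\<lambda>k::nat. (s ^^ k) v))" by simp
    ultimately have "finite (UNIV::nat set)" using finite_imageD by blast
    thus False by simp
  qed
  then obtain a b where ab: "a < b" "(s ^^ a) v = (s ^^ b) v"
    unfolding inj_def by (metis linorder_neqE_nat)
  have "(s ^^ a) ((s ^^ (b - a)) v) = (s ^^ a) v"
    using ab by (simp add: funpow_add[symmetric, THEN fun_cong, simplified comp_apply])
  hence per: "(s ^^ (b - a)) v = v" using inj_fn[OF injs, of a] by (meson injD)
  define m where "m = (LEAST m. 0 < m \<and> (s ^^ m) v = v)"
  have mex: "0 < b - a \<and> (s ^^ (b - a)) v = v" using ab per by simp
  have m1: "0 < m \<and> (s ^^ m) v = v" unfolding m_def using mex by (rule LeastI)
  have m2: "\<And>k. 0 < k \<Longrightarrow> k < m \<Longrightarrow> (s ^^ k) v \<noteq> v"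
    unfolding m_def using not_less_Least by blast
  define xs where "xs = map (\<lambda>k. (s ^^ k) v) [0..<m]"
  have lxs: "length xs = m" unfolding xs_def by simp
  have nth: "k < m \<Longrightarrow> xs ! k = (s ^^ k) v" for k unfolding xs_def by simp
  have dist: "distinct xs" unfolding xs_def distinct_map
    using inj_on_funpow_least[where f=s and n=m and s=v] m1 m2 by (simp add: atLeast0LessThan)
  have setxs: "set xs = UNIV"
  proof -
    have "x \<in> set xs" for x
    proof -
      from OU obtain k where "x = (s ^^ k) v" unfolding Orb_def by (metis UNIV_I imageE)
      hence "x = (s ^^ (k mod m)) v" using funpow_mod_eq[where f=s and n=m and x=v and m=k] m1 by simp
      moreover have "k mod m < m" using m1 by simp
      ultimately show ?thesis unfolding xs_def by auto
    qed
    thus ?thesis by auto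
  qed
  have nxt: "k < m \<Longrightarrow> xs ! ((k + 1) mod m) = s (xs ! k)" for k
  proof -
    assume "k < m"
    have "xs ! ((k + 1) mod m) = (s ^^ ((k+1) mod m)) v" using nth m1 by simp
    also have "\<dots> = (s ^^ (k+1)) v" using funpow_mod_eq[where f=s and n=m and x=v and m="k+1"] m1 by simp
    also have "\<dots> = s (xs ! k)" using nth \<open>k < m\<close> by simp
    finally show ?thesis .
  qed
  have "T_edges W = {(xs ! k, xs ! ((k + 1) mod length xs)) | k. k < length xs}"
  proof (rule set_eqI, rule iffI)
    fix e assume "e \<in> T_edges W"
    then obtain i j where e: "e = (i, j)" "W i j > 1/2" unfolding T_edges_def by auto
    hence j: "j = s i" using sU by simp
    obtain k where "k < m" "xs ! k = i" using setxs lxs by (metis UNIV_I in_set_conv_nth)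
    thus "e \<in> {(xs ! k, xs ! ((k + 1) mod length xs)) | k. k < length xs}"
      using e j nxt lxs by auto
  next
    fix e assume "e \<in> {(xs ! k, xs ! ((k + 1) mod length xs)) | k. k < length xs}"
    then obtain k where "k < m" "e = (xs ! k, xs ! ((k + 1) mod m))" using lxs by auto
    thus "e \<in> T_edges W" using nxt sW unfolding T_edges_def by auto
  qed
  thus "is_hamiltonian_cycle_edges (T_edges W)"
    unfolding is_hamiltonian_cycle_edges_def using dist setxs by blast
next
  assume "is_hamiltonian_cycle_edges (T_edges W)"
  then obtain xs where d: "set xs = UNIV"
    and E: "T_edges W = {(xs ! k, xs ! ((k + 1) mod length xs)) | k. k < length xs}"
    unfolding is_hamiltonian_cycle_edges_def by blast
  define L where "L = length xs"
  have Lpos: "L > 0" using d unfolding L_def by (metis UNIV_not_empty length_greater_0_conv set_empty)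
  show "\<forall>M. M \<noteq> {} \<and> cohesive W M \<longrightarrow> M = UNIV"
  proof (intro allI impI)
    fix M assume "M \<noteq> {} \<and> cohesive W M"
    then obtain x where x: "x \<in> M" and c: "cohesive W M" by auto
    obtain k0 where k0: "k0 < L" "xs ! k0 = x" using d L_def by (metis UNIV_I in_set_conv_nth)
    have step: "xs ! ((k0 + d) mod L) \<in> M" for d
    proof (induction d)
      case 0 thus ?case using k0 x by simp
    next
      case (Suc d)
      let ?k = "(k0 + d) mod L"
      have "?k < L" using Lpos by simp
      hence "(xs ! ?k, xs ! ((?k + 1) mod L)) \<in> T_edges W" using E L_def by auto
      hence "W (xs ! ?k) (xs ! ((?k + 1) mod L)) > 1/2" unfolding T_edges_def by simp
      hence "xs ! ((?k + 1) mod L) \<in> M" using closed_step[OF assms c Suc.IH] by simp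
      moreover have "(?k + 1) mod L = (k0 + Suc d) mod L" by (simp add: mod_Suc_eq)
      ultimately show ?case by simp
    qed
    have "y \<in> M" for y
    proof -
      obtain k where k: "k < L" "xs ! k = y" using d L_def by (metis UNIV_I in_set_conv_nth)
      have "(k0 + (k + L - k0)) mod L = k" using k k0 by simp
      thus ?thesis using step[of "k + L - k0"] k by simp
    qed
    thus "M = UNIV" by auto
  qed
qed

end
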